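(* Let $\kappa$ be an uncountable cardinal and let $(G_\alpha:\alpha<\kappa)$ be topological groups, each with more than one element. If ${\sf KH}(\kappa,\aleph_1)$ holds, then $\prod_{\alpha<\kappa}G_\alpha$ (with the product topology) has a Rothberger bounded subset, indeed a Rothberger bounded subgroup, of cardinality $\kappa^+$.
   Context: All topological groups are assumed Tychonoff. A subset $X$ of a topological group $(G,* )$ is Rothberger bounded if for every sequence $(U_n:n<\omega)$ of open neighborhoods of the identity there are $g_n\in G$ with $X\subseteq\bigcup_n g_n*U_n$. For uncountable cardinals $\lambda\le\kappa$, a $(\kappa,\lambda)$ Kurepa family is a family $\mathcal F$ of subsets of $\kappa$ with $|\mathcal F|>\kappa$ such that for every infinite $A\subseteq\kappa$ with $|A|<\lambda$, $|\{X\cap A:X\in\mathcal F\}|\le|A|$. ${\sf KH}(\kappa,\lambda)$ is the statement that a $(\kappa,\lambda)$ Kurepa family exists. *)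

theory Defs
  imports "HOL-Analysis.Analysis" "HOL-Algebra.Product_Groups" "HOL-Algebra.Coset"
begin

unbundle cardinal_syntax

definition topological_group :: "('g, 'm) monoid_scheme \<Rightarrow> 'g topology \<Rightarrow> bool" where
  "topological_group G T \<longleftrightarrow>
     group G \<and> topspace T = carrier G \<and>
     continuous_map (prod_topology T T) T (\<lambda>(x, y). x \<otimes>\<^bsub>G\<^esub> y) \<and>
     continuous_map T T (\<lambda>x. inv\<^bsub>G\<^esub> x) \<and>
     t1_space T \<and> completely_regular_space T"

definition rothberger_bounded :: "('g, 'm) monoid_scheme \<Rightarrow> 'g topology \<Rightarrow> 'g set \<Rightarrow> bool" where
  "rothberger_bounded G T X \<longleftrightarrow>
     X \<subseteq> carrier G \<and>
     (\<forall>U :: nat \<Rightarrow> 'g set. (\<forall>n. openin T (U n) \<and> \<one>\<^bsub>G\<^esub> \<in> U n) \<longrightarrow>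
        (\<exists>g :: nat \<Rightarrow> 'g. (\<forall>n. g n \<in> carrier G) \<and> X \<subseteq> (\<Union>n. g n <#\<^bsub>G\<^esub> U n)))"

text \<open>KH(kappa, aleph_1), where kappa = |K|: a family F of subsets of K with |F| > |K|
such that for every infinite A \<subseteq> K with |A| < aleph_1 (i.e. countably infinite),
|{X \<inter> A. X \<in> F}| \<le> |A|.\<close>
definition KH_aleph1 :: "'i set \<Rightarrow> bool" where
  "KH_aleph1 K \<longleftrightarrow>
     (\<exists>F. F \<subseteq> Pow K \<and> card_of K <o card_of F \<and>
        (\<forall>A. A \<subseteq> K \<and> infinite A \<and> countable A \<longrightarrow>
             card_of ((\<lambda>X. X \<inter> A) ` F) \<le>o card_of A))"

end

theory Submission
  imports Defs "HOL-Algebra.Free_Abelian_Groups" "HOL-Library.Countable_Set_Type"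
begin

lemma D_finite:
  assumes "finite T"
  shows "finite {\<sigma>::'x\<Rightarrow>bool. \<forall>Y. \<sigma> Y \<longrightarrow> Y \<in> T}"
proof -
  have "{\<sigma>::'x\<Rightarrow>bool. \<forall>Y. \<sigma> Y \<longrightarrow> Y \<in> T} \<subseteq> (\<lambda>B Y. Y \<in> B) ` Pow T"
  proof
    fix \<sigma> :: "'x\<Rightarrow>bool" assume "\<sigma> \<in> {\<sigma>. \<forall>Y. \<sigma> Y \<longrightarrow> Y \<in> T}"
    then have "{Y. \<sigma> Y} \<in> Pow T" "\<sigma> = (\<lambda>Y. Y \<in> {Y. \<sigma> Y})" by auto
    then show "\<sigma> \<in> (\<lambda>B Y. Y \<in> B) ` Pow T" by blast
  qed
  then show ?thesis using assms finite_subset by blast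
qed

lemma countable_fibre:
  assumes "finite T"
  shows "countable (Pi\<^sub>E {\<sigma>::'x\<Rightarrow>bool. \<forall>Y. \<sigma> Y \<longrightarrow> Y \<in> T} (\<lambda>_. UNIV::int set))"
  by (rule countable_PiE) (auto simp: D_finite assms)

lemma countable_leq_infinite:
  assumes "countable A" "infinite B"
  shows "|A| \<le>o |B|"
  using assms countable_card_of_nat infinite_iff_card_of_nat ordLeq_transitive by blast

theorem theorem9:
  fixes K :: "'i set"
    and G :: "'i \<Rightarrow> ('g, 'm) monoid_scheme"
    and T :: "'i \<Rightarrow> 'g topology"
  assumes "uncountable K"
    and "\<forall>i\<in>K. topological_group (G i) (T i)"
    and "\<forall>i\<in>K. \<exists>x\<in>carrier (G i). \<exists>y\<in>carrier (G i). x \<noteq> y"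
    and "KH_aleph1 K"
  shows "\<exists>H. subgroup H (product_group K G) \<and>
             rothberger_bounded (product_group K G) (product_topology T K) H \<and>
             card_of H =o cardSuc (card_of K)"
proof -
  have grp: "\<And>i. i \<in> K \<Longrightarrow> group (G i)"
    using assms(2) by (simp add: topological_group_def)
  have top: "\<And>i. i \<in> K \<Longrightarrow> topspace (T i) = carrier (G i)"
    using assms(2) by (simp add: topological_group_def)
  define P where "P = product_group K G"
  have gP: "group P" unfolding P_def using grp by simp
  have "\<forall>i\<in>K. \<exists>b. b \<in> carrier (G i) \<and> b \<noteq> \<one>\<^bsub>G i\<^esub>"
    using assms(3) by blast
  then obtain a where a: "\<And>i. i \<in> K \<Longrightarrow> a i \<in> carrier (G i) \<and> a i \<noteq> \<one>\<^bsub>G i\<^esub>"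
    using bchoice[of K "\<lambda>i b. b \<in> carrier (G i) \<and> b \<noteq> \<one>\<^bsub>G i\<^esub>"] by blast
  have infK: "infinite K" using assms(1) countable_finite by blast
  obtain F where F0: "F \<subseteq> Pow K \<and> |K| <o |F| \<and>
        (\<forall>A. A \<subseteq> K \<and> infinite A \<and> countable A \<longrightarrow> |(\<lambda>X. X \<inter> A) ` F| \<le>o card_of A)"
    using assms(4) unfolding KH_aleph1_def by (rule exE)
  have F: "F \<subseteq> Pow K" "|K| <o |F|" using F0 by simp_all
  have FKH: "\<And>A. A \<subseteq> K \<Longrightarrow> infinite A \<Longrightarrow> countable A \<Longrightarrow> |(\<lambda>X. X \<inter> A) ` F| \<le>o |A|"
    using F0 by simp
  define Fs where "Fs = Field (cardSuc (card_of K))"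
  have Fs_iso: "|Fs| =o cardSuc |K|"
    unfolding Fs_def by (simp add: card_of_Field_ordIso cardSuc_Card_order card_of_Card_order)
  have "cardSuc |K| \<le>o |F|"
    by (rule cardSuc_least) (use F in \<open>auto simp: card_of_Card_order\<close>)
  then have "|Fs| \<le>o |F|" using Fs_iso ordIso_ordLeq_trans by blast
  then obtain j where j: "inj_on j Fs" "j ` Fs \<subseteq> F" using card_of_ordLeq[of Fs F] by blast
  define F' where "F' = j ` Fs"
  have F'F: "F' \<subseteq> F" using j F'_def by simp
  have F'iso: "|F'| =o cardSuc |K|"
  proof -
    have "|Fs| =o |F'|" unfolding F'_def using j(1) card_of_ordIsoI inj_on_imp_bij_betw by blast
    then show ?thesis using Fs_iso ordIso_symmetric ordIso_transitive by blast
  qed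
  have infF': "infinite F'"
  proof
    assume "finite F'"
    have "|K| <o |F'|" using F'iso cardSuc_greater[OF card_of_Card_order[of K]]
      ordLess_ordIso_trans ordIso_symmetric by blast
    then have "|K| \<le>o |F'|" using ordLess_imp_ordLeq by blast
    then show False using \<open>finite F'\<close> infK card_of_ordLeq_finite by blast
  qed
  define H where "H = {f \<in> carrier P. \<exists>S (k::('i set \<Rightarrow> bool) \<Rightarrow> int). finite S \<and> S \<subseteq> F' \<and>
      (\<forall>i\<in>K. f i = a i [^]\<^bsub>G i\<^esub> k (\<lambda>X. X \<in> S \<and> i \<in> X))}"
  have carrP: "carrier P = (\<Pi>\<^sub>E i\<in>K. carrier (G i))" unfolding P_def by simp
  have oneP: "\<one>\<^bsub>P\<^esub> = (\<lambda>i\<in>K. \<one>\<^bsub>G i\<^esub>)" unfolding P_def by simp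
  have multP: "\<And>f g. f \<otimes>\<^bsub>P\<^esub> g = (\<lambda>i\<in>K. f i \<otimes>\<^bsub>G i\<^esub> g i)" unfolding P_def by simp
  have invP: "\<And>f. f \<in> carrier P \<Longrightarrow> inv\<^bsub>P\<^esub> f = (\<lambda>i\<in>K. inv\<^bsub>G i\<^esub> f i)"
    unfolding P_def using grp by simp
  have H_I: "\<And>f S (k::('i set \<Rightarrow> bool) \<Rightarrow> int). f \<in> carrier P \<Longrightarrow> finite S \<Longrightarrow> S \<subseteq> F' \<Longrightarrow>
      (\<forall>i\<in>K. f i = a i [^]\<^bsub>G i\<^esub> k (\<lambda>X. X \<in> S \<and> i \<in> X)) \<Longrightarrow> f \<in> H"
    unfolding H_def by blast
  have H_E: "\<And>f. f \<in> H \<Longrightarrow> f \<in> carrier P \<and> (\<exists>S (k::('i set \<Rightarrow> bool) \<Rightarrow> int). finite S \<and> S \<subseteq> F' \<and>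
      (\<forall>i\<in>K. f i = a i [^]\<^bsub>G i\<^esub> k (\<lambda>X. X \<in> S \<and> i \<in> X)))"
    unfolding H_def by (simp only: mem_Collect_eq)
  have oneH: "\<one>\<^bsub>P\<^esub> \<in> H"
  proof -
    have "\<one>\<^bsub>P\<^esub> \<in> carrier P" by (rule monoid.one_closed[OF group.is_monoid[OF gP]])
    moreover have "\<forall>i\<in>K. \<one>\<^bsub>P\<^esub> i = a i [^]\<^bsub>G i\<^esub> (\<lambda>_. 0::int) (\<lambda>X. X \<in> {} \<and> i \<in> X)"
      by (simp add: oneP)
    ultimately show ?thesis using H_I[of "\<one>\<^bsub>P\<^esub>" "{}" "\<lambda>_. 0"] by simp
  qed
  have sub: "subgroup H P"
  proof (rule group.subgroupI[OF gP])
    show "H \<subseteq> carrier P" using H_E by blast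
    show "H \<noteq> {}" using oneH by blast
  next
    fix f assume fH: "f \<in> H"
    obtain S and k :: "('i set \<Rightarrow> bool) \<Rightarrow> int" where f0: "finite S" "S \<subseteq> F'"
      "\<forall>i\<in>K. f i = a i [^]\<^bsub>G i\<^esub> k (\<lambda>X. X \<in> S \<and> i \<in> X)" using H_E[OF fH] by blast
    have fc: "f \<in> carrier P" using H_E[OF fH] by (rule conjunct1)
    note f = fc f0
    have "inv\<^bsub>P\<^esub> f \<in> carrier P" using gP f(1) by (rule group.inv_closed)
    moreover have "\<forall>i\<in>K. (inv\<^bsub>P\<^esub> f) i = a i [^]\<^bsub>G i\<^esub> (\<lambda>\<sigma>. - k \<sigma>) (\<lambda>X. X \<in> S \<and> i \<in> X)"
    proof
      fix i assume i: "i \<in> K"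
      show "(inv\<^bsub>P\<^esub> f) i = a i [^]\<^bsub>G i\<^esub> (\<lambda>\<sigma>. - k \<sigma>) (\<lambda>X. X \<in> S \<and> i \<in> X)"
        using i f(4) invP[OF f(1)] group.int_pow_neg[OF grp[OF i] conjunct1[OF a[OF i]]] by simp
    qed
    ultimately show "inv\<^bsub>P\<^esub> f \<in> H" using f(2,3) H_I[of "inv\<^bsub>P\<^esub> f" S "\<lambda>\<sigma>. - k \<sigma>"] by blast
  next
    fix f g assume fH: "f \<in> H" and gH: "g \<in> H"
    obtain S and k :: "('i set \<Rightarrow> bool) \<Rightarrow> int" where f: "finite S" "S \<subseteq> F'"
      "\<forall>i\<in>K. f i = a i [^]\<^bsub>G i\<^esub> k (\<lambda>X. X \<in> S \<and> i \<in> X)" using H_E[OF fH] by blast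
    obtain S' and k' :: "('i set \<Rightarrow> bool) \<Rightarrow> int" where g: "finite S'" "S' \<subseteq> F'"
      "\<forall>i\<in>K. g i = a i [^]\<^bsub>G i\<^esub> k' (\<lambda>X. X \<in> S' \<and> i \<in> X)" using H_E[OF gH] by blast
    have fc: "f \<in> carrier P" and gc: "g \<in> carrier P" using H_E fH gH by blast+
    define k'' where "k'' = (\<lambda>\<sigma>. k (\<lambda>X. X \<in> S \<and> \<sigma> X) + k' (\<lambda>X. X \<in> S' \<and> \<sigma> X))"
    have "f \<otimes>\<^bsub>P\<^esub> g \<in> carrier P" using fc gc by (rule monoid.m_closed[OF group.is_monoid[OF gP]])
    moreover have "\<forall>i\<in>K. (f \<otimes>\<^bsub>P\<^esub> g) i = a i [^]\<^bsub>G i\<^esub> k'' (\<lambda>X. X \<in> S \<union> S' \<and> i \<in> X)"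
    proof
      fix i assume i: "i \<in> K"
      have e1: "(\<lambda>X. X \<in> S \<and> (X \<in> S \<union> S' \<and> i \<in> X)) = (\<lambda>X. X \<in> S \<and> i \<in> X)" by auto
      have e2: "(\<lambda>X. X \<in> S' \<and> (X \<in> S \<union> S' \<and> i \<in> X)) = (\<lambda>X. X \<in> S' \<and> i \<in> X)" by auto
      show "(f \<otimes>\<^bsub>P\<^esub> g) i = a i [^]\<^bsub>G i\<^esub> k'' (\<lambda>X. X \<in> S \<union> S' \<and> i \<in> X)"
        unfolding k''_def e1 e2
        using i f(3) g(3) multP group.int_pow_mult[OF grp[OF i] conjunct1[OF a[OF i]]] by simp
    qed
    moreover have "finite (S \<union> S')" "S \<union> S' \<subseteq> F'" using f(1,2) g(1,2) by auto
    ultimately show "f \<otimes>\<^bsub>P\<^esub> g \<in> H" using H_I[of "f \<otimes>\<^bsub>P\<^esub> g" "S \<union> S'" k''] by blast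
  qed
  have rb: "rothberger_bounded P (product_topology T K) H"
    unfolding rothberger_bounded_def
  proof (intro conjI allI impI)
    show "H \<subseteq> carrier P" using H_E by blast
    fix U :: "nat \<Rightarrow> ('i \<Rightarrow> 'g) set"
    assume U: "\<forall>n. openin (product_topology T K) (U n) \<and> \<one>\<^bsub>P\<^esub> \<in> U n"
    have "\<forall>n. \<exists>V. finite {i \<in> K. V i \<noteq> topspace (T i)} \<and> (\<forall>i\<in>K. openin (T i) (V i)) \<and>
              \<one>\<^bsub>P\<^esub> \<in> Pi\<^sub>E K V \<and> Pi\<^sub>E K V \<subseteq> U n"
    proof
      fix n
      have "openin (product_topology T K) (U n)" "\<one>\<^bsub>P\<^esub> \<in> U n" using U by auto
      then show "\<exists>V. finite {i \<in> K. V i \<noteq> topspace (T i)} \<and> (\<forall>i\<in>K. openin (T i) (V i)) \<and>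
              \<one>\<^bsub>P\<^esub> \<in> Pi\<^sub>E K V \<and> Pi\<^sub>E K V \<subseteq> U n"
        unfolding openin_product_topology_alt by blast
    qed
    from choice[OF this] obtain V where V: "\<And>n. finite {i \<in> K. V n i \<noteq> topspace (T i)}"
      "\<And>n. \<one>\<^bsub>P\<^esub> \<in> Pi\<^sub>E K (V n)" "\<And>n. Pi\<^sub>E K (V n) \<subseteq> U n" by blast
    define A0 where "A0 = (\<Union>n. {i \<in> K. V n i \<noteq> topspace (T i)})"
    have cA0: "countable A0" unfolding A0_def using V(1) countable_finite by blast
    obtain c :: "nat \<Rightarrow> 'i" where c: "inj c" "range c \<subseteq> K" using infinite_countable_subset[OF infK] by blast
    define A where "A = A0 \<union> range c"
    have AK: "A \<subseteq> K" unfolding A_def A0_def using c(2) by blast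
    have cA: "countable A" unfolding A_def using cA0 by simp
    have iA: "infinite A" unfolding A_def using range_inj_infinite[OF c(1)] by (meson infinite_Un)
    have A0A: "A0 \<subseteq> A" unfolding A_def by blast
    define Tr where "Tr = (\<lambda>X. X \<inter> A) ` F'"
    have cTr: "countable Tr"
    proof -
      have "|Tr| \<le>o |(\<lambda>X. X \<inter> A) ` F|" unfolding Tr_def using F'F by (intro card_of_mono1) blast
      moreover have "|(\<lambda>X. X \<inter> A) ` F| \<le>o |A|" using FKH AK iA cA by blast
      moreover have "|A| \<le>o |UNIV :: nat set|" using cA countable_card_of_nat by blast
      ultimately show ?thesis using countable_card_of_nat ordLeq_transitive by metis
    qed
    define D where "D = (\<lambda>S::'i set set. {\<sigma>::'i set \<Rightarrow> bool. \<forall>Y. \<sigma> Y \<longrightarrow> Y \<in> S})"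
    define \<Psi> where "\<Psi> = (\<lambda>(S::'i set set, \<kappa>::('i set \<Rightarrow> bool) \<Rightarrow> int). \<lambda>i\<in>A. a i [^]\<^bsub>G i\<^esub> \<kappa> (\<lambda>X. X \<in> S \<and> i \<in> X))"
    define R where "R = (\<lambda>f. restrict f A) ` H"
    have Rsub: "R \<subseteq> \<Psi> ` (SIGMA S:{S. finite S \<and> S \<subseteq> Tr}. Pi\<^sub>E (D S) (\<lambda>_. UNIV::int set))"
    proof
      fix r assume "r \<in> R"
      then obtain f where fH: "f \<in> H" and r: "r = restrict f A" unfolding R_def by blast
      obtain S and k :: "('i set \<Rightarrow> bool) \<Rightarrow> int" where f0: "finite S" "S \<subseteq> F'"
        "\<forall>i\<in>K. f i = a i [^]\<^bsub>G i\<^esub> k (\<lambda>X. X \<in> S \<and> i \<in> X)" using H_E[OF fH] by blast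
      define T0 where "T0 = (\<lambda>X. X \<inter> A) ` S"
      define \<kappa> where "\<kappa> = restrict (\<lambda>\<sigma>. k (\<lambda>X. X \<in> S \<and> \<sigma> (X \<inter> A))) (D T0)"
      have "r = \<Psi> (T0, \<kappa>)"
      proof
        fix i show "r i = \<Psi> (T0, \<kappa>) i"
        proof (cases "i \<in> A")
          case True
          have inD: "(\<lambda>Y. Y \<in> T0 \<and> i \<in> Y) \<in> D T0" unfolding D_def by blast
          have eq: "(\<lambda>X. X \<in> S \<and> (X \<inter> A \<in> T0 \<and> i \<in> X \<inter> A)) = (\<lambda>X. X \<in> S \<and> i \<in> X)"
            using True unfolding T0_def by auto
          have eq2: "(\<lambda>X. X \<in> S \<and> X \<inter> A \<in> T0 \<and> i \<in> X) = (\<lambda>X. X \<in> S \<and> i \<in> X)"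
            using True unfolding T0_def by auto
          have "\<Psi> (T0, \<kappa>) i = a i [^]\<^bsub>G i\<^esub> k (\<lambda>X. X \<in> S \<and> X \<inter> A \<in> T0 \<and> i \<in> X)"
            using True inD unfolding \<Psi>_def \<kappa>_def by simp
          then have "\<Psi> (T0, \<kappa>) i = a i [^]\<^bsub>G i\<^esub> k (\<lambda>X. X \<in> S \<and> i \<in> X)"
            by (simp only: eq2)
          then show ?thesis using True AK f0(3) r by auto
        next
          case False then show ?thesis using r by (simp add: \<Psi>_def)
        qed
      qed
      moreover have "(T0, \<kappa>) \<in> (SIGMA S:{S. finite S \<and> S \<subseteq> Tr}. Pi\<^sub>E (D S) (\<lambda>_. UNIV::int set))"
        using f0(1,2) unfolding T0_def Tr_def \<kappa>_def by auto
      ultimately show "r \<in> \<Psi> ` (SIGMA S:{S. finite S \<and> S \<subseteq> Tr}. Pi\<^sub>E (D S) (\<lambda>_. UNIV::int set))" by blast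
    qed
    have cR: "countable R"
    proof (rule countable_subset[OF Rsub], rule countable_image, rule countable_SIGMA)
      show "countable {S. finite S \<and> S \<subseteq> Tr}" using cTr by (rule countable_Collect_finite_subset)
      fix S assume "S \<in> {S. finite S \<and> S \<subseteq> Tr}"
      then show "countable (Pi\<^sub>E (D S) (\<lambda>_. UNIV::int set))" unfolding D_def
        using countable_fibre by auto
    qed
    have Rne: "R \<noteq> {}" unfolding R_def using oneH by blast
    define e where "e = from_nat_into R"
    have rangee: "range e = R" unfolding e_def using Rne cR by simp
    define g where "g = (\<lambda>n. SOME h. h \<in> H \<and> restrict h A = e n)"
    have gn: "g n \<in> H \<and> restrict (g n) A = e n" for n
    proof -
      have "e n \<in> R" using rangee by blast
      then obtain h where "h \<in> H" "e n = restrict h A" unfolding R_def by (rule imageE)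
      then have "\<exists>h. h \<in> H \<and> restrict h A = e n" by auto
      then show ?thesis unfolding g_def by (rule someI_ex[where P="\<lambda>h. h \<in> H \<and> restrict h A = e n"])
    qed
    have gc: "g n \<in> carrier P" for n using H_E[OF conjunct1[OF gn[of n]]] by (rule conjunct1)
    interpret PG: group P by (rule gP)
    show "\<exists>g. (\<forall>n. g n \<in> carrier P) \<and> H \<subseteq> (\<Union>n. g n <#\<^bsub>P\<^esub> U n)"
    proof (intro exI conjI allI)
      show "g n \<in> carrier P" for n by (rule gc)
      show "H \<subseteq> (\<Union>n. g n <#\<^bsub>P\<^esub> U n)"
      proof
        fix f assume fH: "f \<in> H"
        have fc: "f \<in> carrier P" using H_E[OF fH] by (rule conjunct1)
        have "restrict f A \<in> R" unfolding R_def using fH by blast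
        then obtain n where n: "restrict f A = e n" using rangee by (metis rangeE)
        have agree: "\<And>i. i \<in> A \<Longrightarrow> g n i = f i"
        proof -
          fix i assume i: "i \<in> A"
          have "restrict (g n) A i = restrict f A i" using gn n by simp
          then show "g n i = f i" using i by simp
        qed
        define h where "h = inv\<^bsub>P\<^esub> (g n) \<otimes>\<^bsub>P\<^esub> f"
        have hval: "h = (\<lambda>i\<in>K. inv\<^bsub>G i\<^esub> (g n i) \<otimes>\<^bsub>G i\<^esub> f i)"
          unfolding h_def multP invP[OF gc] by (intro ext) simp
        have "h \<in> Pi\<^sub>E K (V n)"
        proof -
          have "h i \<in> V n i" if i: "i \<in> K" for i
          proof (cases "V n i = topspace (T i)")
            case True
            have "g n i \<in> carrier (G i)" "f i \<in> carrier (G i)" using gc fc i carrP by auto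
            then show ?thesis using True top[OF i] hval i grp[OF i] by (simp add: group.inv_closed monoid.m_closed group.is_monoid)
          next
            case False
            then have "i \<in> A" using i A0A unfolding A0_def by blast
            then have "g n i = f i" by (rule agree)
            moreover have "f i \<in> carrier (G i)" using fc i carrP by auto
            moreover have "\<one>\<^bsub>G i\<^esub> \<in> V n i" using V(2)[of n] i oneP by auto
            ultimately show ?thesis using hval i grp[OF i] by (simp add: group.l_inv)
          qed
          then show ?thesis using hval by auto
        qed
        then have hU: "h \<in> U n" using V(3) by blast
        have "f = g n \<otimes>\<^bsub>P\<^esub> h" unfolding h_def
          using gc fc by (simp add: PG.m_assoc[symmetric])
        then have "f \<in> g n <#\<^bsub>P\<^esub> U n" using hU unfolding l_coset_def by blast
        then show "f \<in> (\<Union>n. g n <#\<^bsub>P\<^esub> U n)" by blast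
      qed
    qed
  qed
  have card: "|H| =o cardSuc (card_of K)"
  proof -
    define x where "x = (\<lambda>X. \<lambda>i\<in>K. a i [^]\<^bsub>G i\<^esub> (if i \<in> X then 1 else 0::int))"
    have xval: "\<And>X i. i \<in> K \<Longrightarrow> x X i = (if i \<in> X then a i else \<one>\<^bsub>G i\<^esub>)"
      unfolding x_def using grp a by (simp add: group.int_pow_1)
    have xH: "x X \<in> H" if X: "X \<in> F'" for X
    proof -
      have "x X \<in> carrier P" unfolding carrP x_def
        using grp a by (auto simp: group.int_pow_closed)
      moreover have "\<forall>i\<in>K. x X i = a i [^]\<^bsub>G i\<^esub> (\<lambda>\<sigma>. if \<sigma> X then 1 else 0::int) (\<lambda>Y. Y \<in> {X} \<and> i \<in> Y)"
        by (simp add: x_def)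
      ultimately show ?thesis using X H_I[of "x X" "{X}" "\<lambda>\<sigma>. if \<sigma> X then 1 else 0::int"] by blast
    qed
    have F'K: "F' \<subseteq> Pow K" using F'F F(1) by blast
    have injx: "inj_on x F'"
    proof (rule inj_onI)
      fix X Y assume XY: "X \<in> F'" "Y \<in> F'" "x X = x Y"
      have "\<forall>i\<in>K. (i \<in> X) = (i \<in> Y)"
      proof
        fix i assume i: "i \<in> K"
        have "x X i = x Y i" using XY(3) by simp
        then show "(i \<in> X) = (i \<in> Y)" using xval[OF i] a[OF i] by (auto split: if_splits)
      qed
      then show "X = Y" using XY(1,2) F'K by blast
    qed
    have low: "|F'| \<le>o |H|" using injx xH card_of_ordLeq[of F' H] by blast
    define D where "D = (\<lambda>S::'i set set. {\<sigma>::'i set \<Rightarrow> bool. \<forall>Y. \<sigma> Y \<longrightarrow> Y \<in> S})"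
    define \<Phi> where "\<Phi> = (\<lambda>(S::'i set set, \<kappa>::('i set \<Rightarrow> bool) \<Rightarrow> int). \<lambda>i\<in>K. a i [^]\<^bsub>G i\<^esub> \<kappa> (\<lambda>X. X \<in> S \<and> i \<in> X))"
    have Hsub: "H \<subseteq> \<Phi> ` (SIGMA S:Fpow F'. Pi\<^sub>E (D S) (\<lambda>_. UNIV::int set))"
    proof
      fix f assume fH: "f \<in> H"
      obtain S and k :: "('i set \<Rightarrow> bool) \<Rightarrow> int" where f0: "finite S" "S \<subseteq> F'"
        "\<forall>i\<in>K. f i = a i [^]\<^bsub>G i\<^esub> k (\<lambda>X. X \<in> S \<and> i \<in> X)" using H_E[OF fH] by blast
      have fc: "f \<in> carrier P" using H_E[OF fH] by (rule conjunct1)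
      have "f = \<Phi> (S, restrict k (D S))"
      proof
        fix i show "f i = \<Phi> (S, restrict k (D S)) i"
        proof (cases "i \<in> K")
          case True then show ?thesis using f0(3) by (simp add: \<Phi>_def D_def)
        next
          case False then show ?thesis using fc by (simp add: \<Phi>_def carrP PiE_def extensional_def)
        qed
      qed
      moreover have "(S, restrict k (D S)) \<in> (SIGMA S:Fpow F'. Pi\<^sub>E (D S) (\<lambda>_. UNIV::int set))"
        using f0(1,2) by (simp add: Fpow_def)
      ultimately show "f \<in> \<Phi> ` (SIGMA S:Fpow F'. Pi\<^sub>E (D S) (\<lambda>_. UNIV::int set))" by blast
    qed
    have "|SIGMA S:Fpow F'. Pi\<^sub>E (D S) (\<lambda>_. UNIV::int set)| \<le>o |F'|"
    proof (rule card_of_Sigma_ordLeq_infinite[OF infF'])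
      show "|Fpow F'| \<le>o |F'|" using card_of_Fpow_infinite[OF infF'] ordIso_iff_ordLeq by blast
      show "\<forall>S\<in>Fpow F'. |Pi\<^sub>E (D S) (\<lambda>_. UNIV::int set)| \<le>o |F'|"
        unfolding D_def using countable_fibre countable_leq_infinite infF' by (auto simp: Fpow_def)
    qed
    then have up: "|H| \<le>o |F'|"
      using Hsub card_of_mono1 card_of_image ordLeq_transitive by metis
    have "|H| =o |F'|" using up low ordIso_iff_ordLeq by blast
    then show ?thesis using F'iso ordIso_transitive by blast
  qed
  show ?thesis using sub rb card unfolding P_def by blast
qed

end
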